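(* Let $A=[1-\alpha^*,\alpha^*]$ with $\frac12<\alpha^*<1$, $J=[1,2]$, and for $B\subseteq\mathbb R$ let $B_{\mathbb Q}=B\cap\mathbb Q$. Let $W=\{W(t,\alpha):t\ge0,\alpha\in A\}$ be $H$-scalable, and assume that for some $q>0$, $\mathbb E\sup_{u\in J_{\mathbb Q},\alpha\in A_{\mathbb Q}}|W(u,\alpha)|^q<\infty$. Then for every rational $\delta>0$, $$\mathbb E\Big(\sup_{u\in(0,\delta]_{\mathbb Q},\alpha\in A_{\mathbb Q}}|W(u,\alpha)|^q\Big)\le\frac{\delta^{Hq}}{1-2^{-Hq}}\,\mathbb E\Big(\sup_{u\in J_{\mathbb Q},\alpha\in A_{\mathbb Q}}|W(u,\alpha)|^q\Big).$$
   Context: A process $\{W(t,\alpha):t\ge0,\alpha\in A\}$ is $H$-scalable (in $t$) if $W(0,\alpha)=0$ for all $\alpha\in A$ and, for some $H\in(0,\infty)$ and all $c\in(0,\infty)$, the processes $\{W(ct,\alpha):t\ge0,\alpha\in A\}$ and $\{c^HW(t,\alpha):t\ge0,\alpha\in A\}$ have the same finite-dimensional distributions. *)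

theory Defs
  imports "HOL-Probability.Probability"
begin

definition H_scalable ::
  "'a measure \<Rightarrow> real set \<Rightarrow> (real \<Rightarrow> real \<Rightarrow> 'a \<Rightarrow> real) \<Rightarrow> real \<Rightarrow> bool" where
  "H_scalable M A W H \<longleftrightarrow>
     0 < H \<and>
     (\<forall>\<alpha>\<in>A. \<forall>\<omega>\<in>space M. W 0 \<alpha> \<omega> = 0) \<and>
     (\<forall>c::real. c > 0 \<longrightarrow>
        (\<forall>S. finite S \<and> S \<subseteq> {0..} \<times> A \<longrightarrow>
           distr M (PiM S (\<lambda>_. borel)) (\<lambda>\<omega>. \<lambda>p\<in>S. W (c * fst p) (snd p) \<omega>)
         = distr M (PiM S (\<lambda>_. borel)) (\<lambda>\<omega>. \<lambda>p\<in>S. c powr H * W (fst p) (snd p) \<omega>)))"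

end

theory Submission
  imports Defs
begin

lemma finite_scale:
  fixes M :: "'a measure" and W :: "real \<Rightarrow> real \<Rightarrow> 'a \<Rightarrow> real"
  assumes meas: "\<And>t \<alpha>. t \<ge> 0 \<Longrightarrow> \<alpha> \<in> A \<Longrightarrow> W t \<alpha> \<in> borel_measurable M"
    and sc: "H_scalable M A W H" and q: "q > 0" and c: "c > 0"
    and S: "finite S" "S \<subseteq> {0..} \<times> A"
  shows "(\<integral>\<^sup>+ \<omega>. (SUP p\<in>S. ennreal (\<bar>W (c * fst p) (snd p) \<omega>\<bar> powr q)) \<partial>M)
       = ennreal (c powr (H * q)) * (\<integral>\<^sup>+ \<omega>. (SUP p\<in>S. ennreal (\<bar>W (fst p) (snd p) \<omega>\<bar> powr q)) \<partial>M)"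
proof -
  let ?N = "PiM S (\<lambda>_. borel :: real measure)"
  define X1 where "X1 = (\<lambda>\<omega>. \<lambda>p\<in>S. W (c * fst p) (snd p) \<omega>)"
  define X2 where "X2 = (\<lambda>\<omega>. \<lambda>p\<in>S. c powr H * W (fst p) (snd p) \<omega>)"
  define h where "h = (\<lambda>x::real\<times>real \<Rightarrow> real. SUP p\<in>S. ennreal (\<bar>x p\<bar> powr q))"
  have eq: "distr M ?N X1 = distr M ?N X2"
    using sc S c unfolding H_scalable_def X1_def X2_def by blast
  have m1: "X1 \<in> measurable M ?N" unfolding X1_def
  proof (rule measurable_restrict)
    fix i assume "i \<in> S"
    then have "fst i \<ge> 0" "snd i \<in> A" using S by auto
    then show "(\<lambda>\<omega>. W (c * fst i) (snd i) \<omega>) \<in> borel_measurable M" using c by (intro meas) auto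
  qed
  have m2: "X2 \<in> measurable M ?N" unfolding X2_def
  proof (rule measurable_restrict)
    fix i assume "i \<in> S"
    then have "fst i \<ge> 0" "snd i \<in> A" using S by auto
    then show "(\<lambda>\<omega>. c powr H * W (fst i) (snd i) \<omega>) \<in> borel_measurable M" by (intro borel_measurable_times meas) auto
  qed
  have hm: "h \<in> borel_measurable ?N" unfolding h_def
  proof (rule borel_measurable_SUP)
    show "countable S" using S by (simp add: countable_finite)
    fix p assume p: "p \<in> S"
    show "(\<lambda>x. ennreal (\<bar>x p\<bar> powr q)) \<in> borel_measurable ?N"
      using p by measurable
  qed
  have "(\<integral>\<^sup>+ \<omega>. (SUP p\<in>S. ennreal (\<bar>W (c * fst p) (snd p) \<omega>\<bar> powr q)) \<partial>M) = (\<integral>\<^sup>+ \<omega>. h (X1 \<omega>) \<partial>M)"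
    unfolding h_def X1_def by (intro nn_integral_cong SUP_cong) auto
  also have "\<dots> = integral\<^sup>N (distr M ?N X1) h" using m1 hm by (simp add: nn_integral_distr)
  also have "\<dots> = integral\<^sup>N (distr M ?N X2) h" using eq by simp
  also have "\<dots> = (\<integral>\<^sup>+ \<omega>. h (X2 \<omega>) \<partial>M)" using m2 hm by (simp add: nn_integral_distr)
  also have "\<dots> = (\<integral>\<^sup>+ \<omega>. ennreal (c powr (H * q)) * (SUP p\<in>S. ennreal (\<bar>W (fst p) (snd p) \<omega>\<bar> powr q)) \<partial>M)"
    unfolding h_def X2_def SUP_mult_left_ennreal
    using c by (intro nn_integral_cong SUP_cong)
      (auto simp: abs_mult powr_mult powr_powr ennreal_mult)
  also have "\<dots> = ennreal (c powr (H * q)) * (\<integral>\<^sup>+ \<omega>. (SUP p\<in>S. ennreal (\<bar>W (fst p) (snd p) \<omega>\<bar> powr q)) \<partial>M)"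
  proof (intro nn_integral_cmult borel_measurable_SUP)
    show "countable S" using S by (simp add: countable_finite)
    fix p assume "p \<in> S"
    then have [measurable]: "W (fst p) (snd p) \<in> borel_measurable M" using S by (intro meas) auto
    show "(\<lambda>\<omega>. ennreal (\<bar>W (fst p) (snd p) \<omega>\<bar> powr q)) \<in> borel_measurable M" by measurable
  qed
  finally show ?thesis .
qed

lemma sup_approx:
  fixes g :: "'p \<Rightarrow> 'a \<Rightarrow> ennreal"
  assumes T: "countable T" "T \<noteq> {}" and gm: "\<And>p. p \<in> T \<Longrightarrow> g p \<in> borel_measurable M"
  shows "(\<integral>\<^sup>+ \<omega>. (SUP p\<in>T. g p \<omega>) \<partial>M) = (SUP n. \<integral>\<^sup>+ \<omega>. (SUP p\<in>from_nat_into T ` {..n}. g p \<omega>) \<partial>M)"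
proof -
  define F where "F n = from_nat_into T ` {..n}" for n
  have FT: "F n \<subseteq> T" for n unfolding F_def using T by (auto intro: from_nat_into)
  have TU: "T = (\<Union>n. F n)"
  proof
    show "T \<subseteq> (\<Union>n. F n)"
    proof
      fix x assume "x \<in> T"
      then obtain k where "from_nat_into T k = x" using from_nat_into_surj T(1) by metis
      then show "x \<in> (\<Union>n. F n)" unfolding F_def by (intro UN_I[of k]) auto
    qed
  qed (use FT in auto)
  have "(SUP p\<in>T. g p \<omega>) = (SUP n. SUP p\<in>F n. g p \<omega>)" for \<omega>
    by (subst TU, rule SUP_UNION)
  then have "(\<integral>\<^sup>+ \<omega>. (SUP p\<in>T. g p \<omega>) \<partial>M) = (\<integral>\<^sup>+ \<omega>. (SUP n. SUP p\<in>F n. g p \<omega>) \<partial>M)"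
    by simp
  also have "\<dots> = (SUP n. \<integral>\<^sup>+ \<omega>. (SUP p\<in>F n. g p \<omega>) \<partial>M)"
  proof (rule nn_integral_monotone_convergence_SUP)
    show "incseq (\<lambda>n \<omega>. SUP p\<in>F n. g p \<omega>)"
      unfolding incseq_def le_fun_def F_def
      by (intro allI impI SUP_subset_mono image_mono) auto
    fix n show "(\<lambda>\<omega>. SUP p\<in>F n. g p \<omega>) \<in> borel_measurable M"
    proof (rule borel_measurable_SUP)
      show "countable (F n)" unfolding F_def by simp
        fix p assume "p \<in> F n"
    then show "g p \<in> borel_measurable M" using FT gm by auto
    qed
  qed
  finally show ?thesis unfolding F_def .
qed

lemma countable_scale:
  fixes M :: "'a measure" and W :: "real \<Rightarrow> real \<Rightarrow> 'a \<Rightarrow> real"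
  assumes meas: "\<And>t \<alpha>. t \<ge> 0 \<Longrightarrow> \<alpha> \<in> A \<Longrightarrow> W t \<alpha> \<in> borel_measurable M"
    and sc: "H_scalable M A W H" and q: "q > 0" and c: "c > 0"
    and T: "countable T" "T \<noteq> {}" "T \<subseteq> {0..} \<times> A"
  shows "(\<integral>\<^sup>+ \<omega>. (SUP p\<in>T. ennreal (\<bar>W (c * fst p) (snd p) \<omega>\<bar> powr q)) \<partial>M)
       = ennreal (c powr (H * q)) * (\<integral>\<^sup>+ \<omega>. (SUP p\<in>T. ennreal (\<bar>W (fst p) (snd p) \<omega>\<bar> powr q)) \<partial>M)"
proof -
  have FT: "from_nat_into T ` {..n} \<subseteq> T" for n using T by (auto intro: from_nat_into)
  have m1: "(\<lambda>\<omega>. ennreal (\<bar>W (c * fst p) (snd p) \<omega>\<bar> powr q)) \<in> borel_measurable M" if "p \<in> T" for p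
  proof -
    have [measurable]: "W (c * fst p) (snd p) \<in> borel_measurable M" using that T c by (intro meas) auto
    show ?thesis by measurable
  qed
  have m2: "(\<lambda>\<omega>. ennreal (\<bar>W (fst p) (snd p) \<omega>\<bar> powr q)) \<in> borel_measurable M" if "p \<in> T" for p
  proof -
    have [measurable]: "W (fst p) (snd p) \<in> borel_measurable M" using that T by (intro meas) auto
    show ?thesis by measurable
  qed
  show ?thesis
    apply (subst sup_approx[OF T(1,2)], rule m1, assumption)
    apply (subst sup_approx[OF T(1,2)], rule m2, assumption)
    apply (subst finite_scale[OF meas sc q c], assumption, assumption)
    using FT T apply auto[2]
    apply (simp add: SUP_mult_left_ennreal)
    done
qed

lemma dyadic_k:
  fixes u \<delta> :: real assumes "0 < u" "u \<le> \<delta>"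
  shows "\<exists>k. 1 \<le> u / (\<delta> / 2^Suc k) \<and> u / (\<delta> / 2^Suc k) \<le> 2"
proof -
  have "\<exists>n. \<delta>/u < 2^n" using real_arch_pow[of 2 "\<delta>/u"] by auto
  then obtain n where n: "\<delta>/u < 2^n" "\<And>m. m < n \<Longrightarrow> \<not> \<delta>/u < 2^m"
    using exists_least_iff[of "\<lambda>n. \<delta>/u < (2::real)^n"] by blast
  have "n \<noteq> 0"
  proof
    assume "n = 0" then have "\<delta>/u < 1" using n(1) by simp
    with assms show False by (simp add: field_simps)
  qed
  then obtain k where k: "n = Suc k" by (cases n) auto
  have a: "\<delta> / u < 2 ^ Suc k" "2^k \<le> \<delta>/u" using n(1) n(2)[of k] k by (auto simp: not_less)
  have "u / (\<delta> / 2^Suc k) = u * 2^Suc k / \<delta>" using assms by simp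
  moreover have "1 \<le> u * 2^Suc k / \<delta>" using a(1) assms by (simp add: field_simps)
  moreover have "u * 2^Suc k / \<delta> \<le> 2" using a(2) assms by (simp add: field_simps)
  ultimately show ?thesis by auto
qed

lemma powr_term:
  fixes \<delta> r :: real assumes "\<delta> > 0" "r > 0"
  shows "(\<delta> / 2^Suc k) powr r \<le> \<delta> powr r * (2 powr (-r))^k"
proof -
  have P: "((2::real)^Suc k) powr r = (2 powr r)^Suc k"
  proof -
    have "(2::real)^Suc k = 2 powr (real (Suc k))" by (rule powr_realpow[symmetric]) simp
    then have "((2::real)^Suc k) powr r = (2 powr r) powr (real (Suc k))"
      by (simp add: powr_powr mult.commute)
    also have "\<dots> = (2 powr r)^Suc k" by (rule powr_realpow) simp
    finally show ?thesis .
  qed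
  have "(\<delta> / 2^Suc k) powr r = \<delta> powr r / (2^Suc k) powr r" using assms by (simp add: powr_divide)
  also have "\<dots> = \<delta> powr r / (2 powr r)^Suc k" by (simp only: P)
  also have "\<dots> = \<delta> powr r * (2 powr (-r))^Suc k"
    by (simp add: powr_minus power_inverse divide_inverse)
  also have "\<dots> \<le> \<delta> powr r * (2 powr (-r))^k"
  proof (rule mult_left_mono)
    have "1 < (2::real) powr r" using assms by (intro gr_one_powr) auto
    then have "2 powr (-r) \<le> 1" by (simp add: powr_minus_divide)
    then show "(2 powr (-r))^Suc k \<le> (2 powr (-r))^k"
      by (simp add: mult_left_le_one_le)
  qed simp
  finally show ?thesis .
qed

lemma geo_sum:
  fixes \<delta> r :: real assumes "\<delta> > 0" "r > 0"
  shows "(\<Sum>k. ennreal (\<delta> powr r * (2 powr (-r))^k)) = ennreal (\<delta> powr r / (1 - 2 powr (- r)))"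
proof -
  have "1 < (2::real) powr r" using assms by (intro gr_one_powr) auto
  then have lt: "2 powr (-r) < 1" by (simp add: powr_minus_divide)
  have g: "(\<lambda>k. (2 powr (-r))^k) sums (1 / (1 - 2 powr (-r)))"
    by (rule geometric_sums) (use lt in simp)
  have s: "(\<lambda>k. \<delta> powr r * (2 powr (-r))^k) sums (\<delta> powr r / (1 - 2 powr (- r)))"
    using sums_mult[OF g, of "\<delta> powr r"] by simp
  have "(\<lambda>k. ennreal (\<delta> powr r * (2 powr (-r))^k)) sums ennreal (\<delta> powr r / (1 - 2 powr (- r)))"
    using s lt by (subst sums_ennreal) auto
  then show ?thesis by (rule sums_unique[symmetric])
qed

lemma SUP_nested_prod:
  "(SUP u\<in>X. SUP a\<in>Y. g u a) = (SUP p\<in>X \<times> Y. g (fst p) (snd p) :: ennreal)"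
  by (rule antisym) (auto intro!: SUP_least SUP_upper2)

theorem lemma1:
  fixes M :: "'a measure" and W :: "real \<Rightarrow> real \<Rightarrow> 'a \<Rightarrow> real"
    and \<alpha>s H q \<delta> :: real
  assumes "prob_space M"
    and "1/2 < \<alpha>s" and "\<alpha>s < 1"
    and "\<And>t \<alpha>. t \<ge> 0 \<Longrightarrow> \<alpha> \<in> {1 - \<alpha>s..\<alpha>s} \<Longrightarrow> W t \<alpha> \<in> borel_measurable M"
    and "H_scalable M {1 - \<alpha>s..\<alpha>s} W H"
    and "q > 0"
    and "(\<integral>\<^sup>+ \<omega>. (SUP u\<in>{1..2} \<inter> \<rat>. SUP \<alpha>\<in>{1 - \<alpha>s..\<alpha>s} \<inter> \<rat>.
              ennreal (\<bar>W u \<alpha> \<omega>\<bar> powr q)) \<partial>M) < \<infinity>"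
    and "\<delta> \<in> \<rat>" and "\<delta> > 0"
  shows "(\<integral>\<^sup>+ \<omega>. (SUP u\<in>{0<..\<delta>} \<inter> \<rat>. SUP \<alpha>\<in>{1 - \<alpha>s..\<alpha>s} \<inter> \<rat>.
              ennreal (\<bar>W u \<alpha> \<omega>\<bar> powr q)) \<partial>M)
         \<le> ennreal (\<delta> powr (H * q) / (1 - 2 powr (- (H * q))))
           * (\<integral>\<^sup>+ \<omega>. (SUP u\<in>{1..2} \<inter> \<rat>. SUP \<alpha>\<in>{1 - \<alpha>s..\<alpha>s} \<inter> \<rat>.
              ennreal (\<bar>W u \<alpha> \<omega>\<bar> powr q)) \<partial>M)"
proof -
  note meas = assms(4) and sc = assms(5) and q = assms(6)
  define A where "A = {1 - \<alpha>s..\<alpha>s}"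
  define JQ where "JQ = {1..2::real} \<inter> \<rat>"
  define AQ where "AQ = A \<inter> \<rat>"
  define f where "f u a \<omega> = ennreal (\<bar>W u a \<omega>\<bar> powr q)" for u a \<omega>
  define E where "E = (\<integral>\<^sup>+ \<omega>. (SUP u\<in>JQ. SUP a\<in>AQ. f u a \<omega>) \<partial>M)"
  define r where "r = H * q"
  define c where "c k = \<delta> / 2^Suc k" for k :: nat
  define G where "G k \<omega> = (SUP t\<in>JQ. SUP a\<in>AQ. f (c k * t) a \<omega>)" for k \<omega>
  have H: "H > 0" using sc unfolding H_scalable_def by simp
  have r: "r > 0" unfolding r_def using H q by simp
  have cpos: "c k > 0" for k unfolding c_def using assms(9) by simp
  have crat: "c k \<in> \<rat>" for k unfolding c_def using assms(8) by simp
  have T: "countable (JQ \<times> AQ)" "JQ \<times> AQ \<noteq> {}" "JQ \<times> AQ \<subseteq> {0..} \<times> A"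
  proof -
    show "countable (JQ \<times> AQ)" unfolding JQ_def AQ_def
      using countable_rat by (auto intro: countable_Int2)
    have "(1, 1/2) \<in> JQ \<times> AQ" unfolding JQ_def AQ_def A_def using assms(2) by auto
    then show "JQ \<times> AQ \<noteq> {}" by blast
    show "JQ \<times> AQ \<subseteq> {0..} \<times> A" unfolding JQ_def AQ_def by auto
  qed
  have intG: "(\<integral>\<^sup>+ \<omega>. G k \<omega> \<partial>M) = ennreal (c k powr r) * E" for k
  proof -
    have "(\<integral>\<^sup>+ \<omega>. G k \<omega> \<partial>M) = (\<integral>\<^sup>+ \<omega>. (SUP p\<in>JQ \<times> AQ. ennreal (\<bar>W (c k * fst p) (snd p) \<omega>\<bar> powr q)) \<partial>M)"
      unfolding G_def f_def SUP_nested_prod ..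
    also have "\<dots> = ennreal (c k powr (H * q)) * (\<integral>\<^sup>+ \<omega>. (SUP p\<in>JQ \<times> AQ. ennreal (\<bar>W (fst p) (snd p) \<omega>\<bar> powr q)) \<partial>M)"
      using meas sc q cpos T unfolding A_def by (intro countable_scale) auto
    also have "\<dots> = ennreal (c k powr r) * E"
      unfolding E_def f_def SUP_nested_prod r_def ..
    finally show ?thesis .
  qed
  have Gm: "G k \<in> borel_measurable M" for k
    unfolding G_def
  proof (intro borel_measurable_SUP)
    show "countable JQ" unfolding JQ_def using countable_rat by (auto intro: countable_Int2)
    show "countable AQ" unfolding AQ_def using countable_rat by (auto intro: countable_Int2)
    fix t a assume "t \<in> JQ" "a \<in> AQ"
    then have "c k * t \<ge> 0" "a \<in> {1 - \<alpha>s..\<alpha>s}" using cpos[of k] unfolding JQ_def AQ_def A_def by auto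
    then have [measurable]: "W (c k * t) a \<in> borel_measurable M" by (rule meas)
    show "(\<lambda>\<omega>. f (c k * t) a \<omega>) \<in> borel_measurable M" unfolding f_def by measurable
  qed
  have pw: "(SUP u\<in>{0<..\<delta>} \<inter> \<rat>. SUP a\<in>AQ. f u a \<omega>) \<le> (\<Sum>k. G k \<omega>)" for \<omega>
  proof (intro SUP_least)
    fix u a assume u: "u \<in> {0<..\<delta>} \<inter> \<rat>" and a: "a \<in> AQ"
    obtain k where k: "1 \<le> u / c k" "u / c k \<le> 2" using dyadic_k[of u \<delta>] u unfolding c_def by auto
    have "u / c k \<in> \<rat>" using u crat[of k] by simp
    then have t: "u / c k \<in> JQ" using k unfolding JQ_def by auto
    have "f u a \<omega> = f (c k * (u / c k)) a \<omega>" using cpos[of k] by simp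
    also have "\<dots> \<le> G k \<omega>" unfolding G_def
      by (rule SUP_upper2[OF t], rule SUP_upper[OF a])
    also have "\<dots> \<le> (\<Sum>k. G k \<omega>)"
      by (meson ennreal_suminf_lessD not_le order_refl)
    finally show "f u a \<omega> \<le> (\<Sum>k. G k \<omega>)" .
  qed
  have "(\<integral>\<^sup>+ \<omega>. (SUP u\<in>{0<..\<delta>} \<inter> \<rat>. SUP a\<in>AQ. f u a \<omega>) \<partial>M) \<le> (\<integral>\<^sup>+ \<omega>. (\<Sum>k. G k \<omega>) \<partial>M)"
    by (rule nn_integral_mono) (rule pw)
  also have "\<dots> = (\<Sum>k. \<integral>\<^sup>+ \<omega>. G k \<omega> \<partial>M)" by (rule nn_integral_suminf[OF Gm])
  also have "\<dots> = (\<Sum>k. ennreal (c k powr r)) * E" by (simp add: intG mult.commute)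
  also have "\<dots> \<le> (\<Sum>k. ennreal (\<delta> powr r * (2 powr (-r))^k)) * E"
  proof (rule mult_right_mono)
    show "(\<Sum>k. ennreal (c k powr r)) \<le> (\<Sum>k. ennreal (\<delta> powr r * (2 powr (-r))^k))"
      unfolding c_def by (intro suminf_le ennreal_leI powr_term[OF assms(9) r]) auto
  qed simp
  also have "\<dots> = ennreal (\<delta> powr r / (1 - 2 powr (- r))) * E"
    using geo_sum[OF assms(9) r] by simp
  finally show ?thesis unfolding E_def f_def JQ_def AQ_def A_def r_def .
qed

end
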